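(* Let $N\ge2$, let $\mathcal{A}=(a_{i_1\cdots i_N})\in\mathbb{C}^{d_1\times\cdots\times d_N}$, and for each $l\in\{1,\dots,N\}$ let $\mathbf{U}^{(l)}=(u^{(l)}_{i_l'i_l})\in\mathbb{C}^{d_l'\times d_l}$. Let $\mathcal{B}=\mathcal{A}\times_1\mathbf{U}^{(1)}\times_2\cdots\times_N\mathbf{U}^{(N)}\in\mathbb{C}^{d_1'\times\cdots\times d_N'}$. Then for every $k\in\{1,\dots,N-1\}$, $n\in\{1,\dots,k\}$, $m\in\{1,\dots,N-k\}$ and all sequences $R=(r_1,\dots,r_k)$, $C=(c_1,\dots,c_{N-k})$ of distinct integers with $\{r_1,\dots,r_k\}\cup\{c_1,\dots,c_{N-k}\}=\{1,\dots,N\}$, $$\mathbf{B}_{(R,n;C,m)}=\big(\mathbf{U}^{(r_{n+1})}\otimes\cdots\otimes\mathbf{U}^{(r_k)}\otimes\mathbf{U}^{(r_1)}\otimes\cdots\otimes\mathbf{U}^{(r_n)}\big)\,\mathbf{A}_{(R,n;C,m)}\,\big(\mathbf{U}^{(c_{m+1})}\otimes\cdots\otimes\mathbf{U}^{(c_{N-k})}\otimes\mathbf{U}^{(c_1)}\otimes\cdots\otimes\mathbf{U}^{(c_m)}\big)^{\rm T},$$ where $\mathbf{A}_{(R,n;C,m)}$ and $\mathbf{B}_{(R,n;C,m)}$ are the mixed $(R,n;C,m)$-mode matrix unfoldings of $\mathcal{A}$ and $\mathcal{B}$ and $\otimes$ is the Kronecker product.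
   Context: The $k$-mode product of $\mathcal{A}\in\mathbb{C}^{d_1\times\cdots\times d_N}$ with $\mathbf{U}=(u_{i_k'i_k})\in\mathbb{C}^{d_k'\times d_k}$ is the tensor $\mathcal{A}\times_k\mathbf{U}$ of size $d_1\times\cdots\times d_{k-1}\times d_k'\times d_{k+1}\times\cdots\times d_N$ with entries $\sum_{i_k=1}^{d_k}a_{i_1\cdots i_k\cdots i_N}u_{i_k'i_k}$. Index map: for positive integers $D_1,\dots,D_k$, $n\in\{1,\dots,k\}$, $j_s\in\{1,\dots,D_s\}$, $$\iota_n^{(D_1,\dots,D_k)}(j_1,\dots,j_k)=\Big(\prod_{s=1}^{n}D_s\Big)\sum_{s'=n+1}^{k}\Big((j_{s'}-1)\prod_{s''=s'+1}^{k}D_{s''}\Big)+\sum_{s'=1}^{n}\Big((j_{s'}-1)\prod_{s''=s'+1}^{n}D_{s''}\Big)+1$$ (empty products $1$, empty sums $0$). Mixed mode matrix unfolding: for $\mathcal{X}=(x_{i_1\cdots i_N})\in\mathbb{C}^{D_1\times\cdots\times D_N}$ and $R,C,n,m$ as in the claim, $\mathbf{X}_{(R,n;C,m)}\in\mathbb{C}^{(D_{r_1}\cdots D_{r_k})\times(D_{c_1}\cdots D_{c_{N-k}})}$ has entry $x_{i_1\cdots i_N}$ in row $\iota_n^{(D_{r_1},\dots,D_{r_k})}(i_{r_1},\dots,i_{r_k})$ and column $\iota_m^{(D_{c_1},\dots,D_{c_{N-k}})}(i_{c_1},\dots,i_{c_{N-k}})$. *)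

theory Defs
  imports Complex_Main "Jordan_Normal_Form.Matrix"
begin

(* Conventions: tensors are functions from index lists (1-based indices, list position l
   corresponds to mode l+1) to complex numbers, together with a dimension list.
   Matrices are Jordan_Normal_Form matrices (0-based); the paper's 1-based entry (p,q)
   is the JNF entry (p-1,q-1). Mode numbers in R, C are 1-based as in the paper. *)

definition iota :: "nat \<Rightarrow> nat list \<Rightarrow> nat list \<Rightarrow> nat" where
  "iota n D j =
     (\<Prod>s<n. D ! s) *
       (\<Sum>s'\<in>{n..<length D}. (j ! s' - 1) * (\<Prod>s''\<in>{Suc s'..<length D}. D ! s''))
     + (\<Sum>s'<n. (j ! s' - 1) * (\<Prod>s''\<in>{Suc s'..<n}. D ! s'')) + 1"

definition valid_index :: "nat list \<Rightarrow> nat list \<Rightarrow> bool" where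
  "valid_index D i \<longleftrightarrow> length i = length D \<and> (\<forall>l<length D. 1 \<le> i ! l \<and> i ! l \<le> D ! l)"

text \<open>k-mode product (mode k+1 in the paper's numbering, k is the 0-based list position).\<close>
definition mode_prod :: "(nat list \<Rightarrow> complex) \<Rightarrow> nat \<Rightarrow> complex mat \<Rightarrow> (nat list \<Rightarrow> complex)" where
  "mode_prod A k U = (\<lambda>i. \<Sum>t<dim_col U. A (i[k := Suc t]) * U $$ (i ! k - 1, t))"

definition multi_mode_prod :: "(nat list \<Rightarrow> complex) \<Rightarrow> complex mat list \<Rightarrow> (nat list \<Rightarrow> complex)" where
  "multi_mode_prod A Us = foldl (\<lambda>T l. mode_prod T l (Us ! l)) A [0..<length Us]"

definition mixed_unfolding ::
  "(nat list \<Rightarrow> complex) \<Rightarrow> nat list \<Rightarrow> nat list \<Rightarrow> nat \<Rightarrow> nat list \<Rightarrow> nat \<Rightarrow> complex mat" where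
  "mixed_unfolding X D R n C m =
     mat (\<Prod>r\<leftarrow>R. D ! (r - 1)) (\<Prod>c\<leftarrow>C. D ! (c - 1))
       (\<lambda>(p, q). X (THE i. valid_index D i
            \<and> iota n (map (\<lambda>r. D ! (r - 1)) R) (map (\<lambda>r. i ! (r - 1)) R) = Suc p
            \<and> iota m (map (\<lambda>c. D ! (c - 1)) C) (map (\<lambda>c. i ! (c - 1)) C) = Suc q))"

definition kron :: "'a::semiring_1 mat \<Rightarrow> 'a mat \<Rightarrow> 'a mat" where
  "kron A B = mat (dim_row A * dim_row B) (dim_col A * dim_col B)
     (\<lambda>(i, j). A $$ (i div dim_row B, j div dim_col B) * B $$ (i mod dim_row B, j mod dim_col B))"

fun kron_list :: "'a::semiring_1 mat list \<Rightarrow> 'a mat" where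
  "kron_list [] = 1\<^sub>m 1"
| "kron_list (A # As) = kron A (kron_list As)"

end

theory Submission
  imports Defs
begin

fun enc :: "nat list \<Rightarrow> nat list \<Rightarrow> nat" where
  "enc (D # Ds) (j # js) = j * prod_list Ds + enc Ds js"
| "enc _ _ = 0"

definition okidx :: "nat list \<Rightarrow> nat list \<Rightarrow> bool" where
  "okidx D j \<longleftrightarrow> length j = length D \<and> (\<forall>s<length D. j ! s < D ! s)"

lemma okidx_Cons: "okidx (D # Ds) (j # js) \<longleftrightarrow> j < D \<and> okidx Ds js"
  unfolding okidx_def by (auto simp: nth_Cons split: nat.splits)

lemma okidx_Nil: "okidx [] js \<longleftrightarrow> js = []" "okidx Ds [] \<longleftrightarrow> Ds = []"
  unfolding okidx_def by auto

lemma enc_less: "okidx D j \<Longrightarrow> enc D j < prod_list D"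
proof (induction D arbitrary: j)
  case Nil then show ?case by (simp add: okidx_Nil)
next
  case (Cons a D)
  then obtain x js where j: "j = x # js" by (cases j) (auto simp: okidx_def)
  with Cons have x: "x < a" and o: "okidx D js" by (auto simp: okidx_Cons)
  have "enc (a # D) j = x * prod_list D + enc D js" by (simp add: j)
  also have "\<dots> < x * prod_list D + prod_list D" using Cons.IH[OF o] by simp
  also have "\<dots> = Suc x * prod_list D" by simp
  also have "\<dots> \<le> a * prod_list D" using x by (intro mult_right_mono) auto
  finally show ?case by simp
qed

lemma enc_div: "okidx (a # D) (x # js) \<Longrightarrow> enc (a # D) (x # js) div prod_list D = x"
  and enc_mod: "okidx (a # D) (x # js) \<Longrightarrow> enc (a # D) (x # js) mod prod_list D = enc D js"
  using enc_less[of D js] by (auto simp: okidx_Cons)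

lemma enc_inj: "okidx D j \<Longrightarrow> okidx D j' \<Longrightarrow> enc D j = enc D j' \<Longrightarrow> j = j'"
proof (induction D arbitrary: j j')
  case Nil then show ?case by (simp add: okidx_Nil)
next
  case (Cons a D)
  then obtain x js where j: "j = x # js" by (cases j) (auto simp: okidx_def)
  from Cons obtain x' js' where j': "j' = x' # js'" by (cases j') (auto simp: okidx_def)
  have "x = x'" using enc_div[of a D x js] enc_div[of a D x' js'] Cons.prems j j' by metis
  moreover have "js = js'"
    using enc_mod[of a D x js] enc_mod[of a D x' js'] Cons.prems j j' Cons.IH
    by (metis okidx_Cons)
  ultimately show ?case by (simp add: j j')
qed

lemma enc_surj: "p < prod_list D \<Longrightarrow> \<exists>j. okidx D j \<and> enc D j = p"
proof (induction D arbitrary: p)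
  case Nil then show ?case by (auto simp: okidx_Nil)
next
  case (Cons a D)
  have pos: "prod_list D > 0" using Cons.prems by (auto intro: gr0I)
  have "p mod prod_list D < prod_list D" using pos by simp
  from Cons.IH[OF this] obtain js where js: "okidx D js" "enc D js = p mod prod_list D" by blast
  have "p div prod_list D < a" using Cons.prems pos
    by (simp add: div_less_iff_less_mult mult.commute)
  then have "okidx (a # D) (p div prod_list D # js)" using js by (simp add: okidx_Cons)
  moreover have "enc (a # D) (p div prod_list D # js) = p" using js by simp
  ultimately show ?case by blast
qed

lemma enc_append: "length x = length X \<Longrightarrow> enc (X @ Y) (x @ y) = enc X x * prod_list Y + enc Y y"
proof (induction X arbitrary: x)
  case Nil then show ?case by simp
next
  case (Cons a X)
  then obtain u xs where x: "x = u # xs" by (cases x) auto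
  with Cons show ?case by (simp add: algebra_simps)
qed

lemma enc_sum: "length j = length D \<Longrightarrow>
  enc D j = (\<Sum>s<length D. j ! s * (\<Prod>s''\<in>{Suc s..<length D}. D ! s''))"
proof (induction D arbitrary: j)
  case Nil then show ?case by simp
next
  case (Cons a D)
  then obtain u js where j: "j = u # js" by (cases j) auto
  have pl: "prod_list D = (\<Prod>s''\<in>{Suc 0..<Suc (length D)}. (a # D) ! s'')"
    using prod.shift_bounds_nat_ivl[of "\<lambda>s''. (a # D) ! s''" 0 1 "length D"]
    by (simp add: prod.list_conv_set_nth)
  have "(\<Sum>s<length (a # D). j ! s * (\<Prod>s''\<in>{Suc s..<length (a # D)}. (a # D) ! s''))
     = u * (\<Prod>s''\<in>{Suc 0..<Suc (length D)}. (a # D) ! s'') +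
       (\<Sum>s<length D. js ! s * (\<Prod>s''\<in>{Suc (Suc s)..<Suc (length D)}. (a # D) ! s''))"
    unfolding j length_Cons sum.lessThan_Suc_shift by (simp only: nth_Cons_0 nth_Cons_Suc)
  also have "(\<lambda>s. (\<Prod>s''\<in>{Suc (Suc s)..<Suc (length D)}. (a # D) ! s''))
     = (\<lambda>s. \<Prod>s''\<in>{Suc s..<length D}. D ! s'')"
    using prod.shift_bounds_nat_ivl[of "\<lambda>s''. (a # D) ! s''" "Suc _" 1 "length D"]
    by (auto intro!: ext)
  finally show ?case using Cons.IH[of js] Cons.prems by (simp add: j pl)
qed

lemma iota_enc:
  assumes len: "length j = length D" and nl: "n \<le> length D"
  shows "iota n D j = enc (drop n D @ take n D) (drop n (map (\<lambda>x. x - 1) j) @ take n (map (\<lambda>x. x - 1) j)) + 1"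
proof -
  let ?j = "map (\<lambda>x. x - 1) j"
  let ?L = "length D"
  have e1: "enc (drop n D @ take n D) (drop n ?j @ take n ?j)
      = enc (drop n D) (drop n ?j) * prod_list (take n D) + enc (take n D) (take n ?j)"
    by (rule enc_append) (simp add: len)
  have p1: "prod_list (take n D) = (\<Prod>s<n. D ! s)"
    using nl by (simp add: prod.list_conv_set_nth min_def atLeast0LessThan)
  have e2: "enc (take n D) (take n ?j) = (\<Sum>s'<n. (j ! s' - 1) * (\<Prod>s''\<in>{Suc s'..<n}. D ! s''))"
    using nl by (subst enc_sum) (auto simp: len min_def intro!: sum.cong prod.cong)
  have e3: "enc (drop n D) (drop n ?j) = (\<Sum>s'\<in>{n..<?L}. (j ! s' - 1) * (\<Prod>s''\<in>{Suc s'..<?L}. D ! s''))"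
  proof -
    have "enc (drop n D) (drop n ?j) = (\<Sum>s<?L - n. (j ! (n + s) - 1) * (\<Prod>s''\<in>{Suc s..<?L - n}. D ! (n + s'')))"
      using nl by (subst enc_sum) (auto simp: len intro!: sum.cong prod.cong)
    also have "\<dots> = (\<Sum>s<?L - n. (j ! (s + n) - 1) * (\<Prod>s''\<in>{Suc s + n..<?L - n + n}. D ! s''))"
      by (intro sum.cong refl, subst prod.shift_bounds_nat_ivl) (simp add: add.commute)
    also have "\<dots> = (\<Sum>s'\<in>{0 + n..<?L - n + n}. (j ! s' - 1) * (\<Prod>s''\<in>{Suc s'..<?L - n + n}. D ! s''))"
      by (subst sum.shift_bounds_nat_ivl) (simp add: atLeast0LessThan)
    finally show ?thesis using nl by simp
  qed
  show ?thesis unfolding iota_def e1 p1 e2 e3 by (simp add: mult.commute)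
qed

lemma kron_dims[simp]: "dim_row (kron A B) = dim_row A * dim_row B" "dim_col (kron A B) = dim_col A * dim_col B"
  unfolding kron_def by auto

lemma kron_list_dims[simp]: "dim_row (kron_list Ms) = prod_list (map dim_row Ms)"
  "dim_col (kron_list Ms) = prod_list (map dim_col Ms)"
  by (induction Ms) auto

lemma kron_list_entry:
  "okidx (map dim_row Ms) is \<Longrightarrow> okidx (map dim_col Ms) js \<Longrightarrow>
   kron_list Ms $$ (enc (map dim_row Ms) is, enc (map dim_col Ms) js) = (\<Prod>l<length Ms. Ms ! l $$ (is ! l, js ! l))"
proof (induction Ms arbitrary: "is" js)
  case Nil then show ?case by (simp add: okidx_Nil)
next
  case (Cons M Ms)
  from Cons.prems obtain i is' where i: "is = i # is'" by (cases "is") (auto simp: okidx_def)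
  from Cons.prems obtain j js' where j: "js = j # js'" by (cases "js") (auto simp: okidx_def)
  have o1: "okidx (dim_row M # map dim_row Ms) (i # is')" and o2: "okidx (dim_col M # map dim_col Ms) (j # js')"
    using Cons.prems i j by auto
  have l1: "enc (map dim_row (M # Ms)) is < dim_row M * dim_row (kron_list Ms)"
    using enc_less[OF Cons.prems(1)] by simp
  have l2: "enc (map dim_col (M # Ms)) js < dim_col M * dim_col (kron_list Ms)"
    using enc_less[OF Cons.prems(2)] by simp
  have "kron_list (M # Ms) $$ (enc (map dim_row (M # Ms)) is, enc (map dim_col (M # Ms)) js)
     = M $$ (i, j) * kron_list Ms $$ (enc (map dim_row Ms) is', enc (map dim_col Ms) js')"
    using l1 l2 enc_div[OF o1] enc_mod[OF o1] enc_div[OF o2] enc_mod[OF o2]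
    by (simp add: kron_def i j)
  also have "\<dots> = M $$ (i, j) * (\<Prod>l<length Ms. Ms ! l $$ (is' ! l, js' ! l))"
    using Cons.IH o1 o2 by (simp add: okidx_Cons)
  finally show ?case unfolding i j length_Cons prod.lessThan_Suc_shift by simp
qed

definition Sset :: "nat list \<Rightarrow> nat \<Rightarrow> nat list \<Rightarrow> nat list set" where
  "Sset d L i = {j. length j = length i \<and> (\<forall>l<L. 1 \<le> j ! l \<and> j ! l \<le> d ! l)
                   \<and> (\<forall>l. L \<le> l \<and> l < length i \<longrightarrow> j ! l = i ! l)}"

lemma finite_Sset: assumes "L \<le> length d" shows "finite (Sset d L i)"
proof -
  let ?M = "Max (insert 0 (set d \<union> set i))"
  have *: "set j \<subseteq> {..?M}" if j: "j \<in> Sset d L i" for j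
  proof
    fix x assume x: "x \<in> set j"
    then obtain l where l: "l < length j" "x = j ! l" by (auto simp: in_set_conv_nth)
    show "x \<in> {..?M}"
    proof (cases "l < L")
      case True
      then have "x \<le> d ! l" "d ! l \<in> set d" using j l assms by (auto simp: Sset_def)
      then show ?thesis by (auto intro: order.trans[OF _ Max_ge])
    next
      case False
      then have "x = i ! l" "i ! l \<in> set i" using j l by (auto simp: Sset_def)
      then show ?thesis by (auto intro: Max_ge)
    qed
  qed
  have "Sset d L i \<subseteq> {xs. set xs \<subseteq> {..?M} \<and> length xs = length i}"
  proof
    fix j assume j: "j \<in> Sset d L i"
    then have "length j = length i" by (simp add: Sset_def)
    with *[OF j] show "j \<in> {xs. set xs \<subseteq> {..?M} \<and> length xs = length i}" by simp
  qed
  then show ?thesis by (rule finite_subset) (rule finite_lists_length_eq, simp)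
qed

lemma mmp:
  assumes "\<forall>l<length d. dim_col (Us ! l) = d ! l" "L \<le> length d" "length i = length d"
  shows "foldl (\<lambda>T l. mode_prod T l (Us ! l)) A [0..<L] i
       = (\<Sum>j\<in>Sset d L i. A j * (\<Prod>l<L. Us ! l $$ (i ! l - 1, j ! l - 1)))"
  using assms(2,3)
proof (induction L arbitrary: i)
  case 0
  have "Sset d 0 i = {i}" by (auto simp: Sset_def intro: nth_equalityI)
  then show ?case by simp
next
  case (Suc L)
  let ?F = "foldl (\<lambda>T l. mode_prod T l (Us ! l)) A [0..<L]"
  let ?g = "\<lambda>j. A j * (\<Prod>l<L. Us ! l $$ (i ! l - 1, j ! l - 1))"
  have dc: "dim_col (Us ! L) = d ! L" using assms(1) Suc.prems by auto
  have "foldl (\<lambda>T l. mode_prod T l (Us ! l)) A [0..<Suc L] i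
      = (\<Sum>t<d ! L. ?F (i[L := Suc t]) * Us ! L $$ (i ! L - 1, t))"
    by (simp add: mode_prod_def dc)
  also have "\<dots> = (\<Sum>t<d ! L. \<Sum>j\<in>Sset d L (i[L := Suc t]). ?g j * Us ! L $$ (i ! L - 1, t))"
    by (intro sum.cong refl, subst Suc.IH) (use Suc.prems in \<open>auto simp: sum_distrib_right intro!: sum.cong prod.cong\<close>)
  also have "\<dots> = (\<Sum>(t, j)\<in>Sigma {..<d ! L} (\<lambda>t. Sset d L (i[L := Suc t])). ?g j * Us ! L $$ (i ! L - 1, t))"
    by (rule sum.Sigma) (use Suc.prems finite_Sset in auto)
  also have "\<dots> = (\<Sum>j\<in>Sset d (Suc L) i. A j * (\<Prod>l<Suc L. Us ! l $$ (i ! l - 1, j ! l - 1)))"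
  proof (rule sum.reindex_bij_witness[where i = "\<lambda>j. (j ! L - 1, j)" and j = snd])
    fix a assume "a \<in> Sigma {..<d ! L} (\<lambda>t. Sset d L (i[L := Suc t]))"
    then obtain t j where a: "a = (t, j)" "t < d ! L" "j \<in> Sset d L (i[L := Suc t])" by auto
    have jL: "j ! L = Suc t" using a Suc.prems by (auto simp: Sset_def)
    show "(snd a ! L - 1, snd a) = a" using a jL by simp
    show "snd a \<in> Sset d (Suc L) i"
      using a jL by (auto simp: Sset_def less_Suc_eq nth_list_update)
    show "A (snd a) * (\<Prod>l<Suc L. Us ! l $$ (i ! l - 1, snd a ! l - 1)) =
          (case a of (t, j) \<Rightarrow> ?g j * Us ! L $$ (i ! L - 1, t))"
      using a jL by simp
  next
    fix b assume b: "b \<in> Sset d (Suc L) i"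
    show "snd (b ! L - 1, b) = b" by simp
    have "1 \<le> b ! L" "b ! L \<le> d ! L" using b by (auto simp: Sset_def)
    then show "(b ! L - 1, b) \<in> Sigma {..<d ! L} (\<lambda>t. Sset d L (i[L := Suc t]))"
      using b Suc.prems by (auto simp: Sset_def nth_list_update)
  qed
  finally show ?case .
qed

definition rot :: "nat \<Rightarrow> 'a list \<Rightarrow> 'a list" where
  "rot n xs = drop n xs @ take n xs"

lemma set_rot[simp]: "set (rot n xs) = set xs"
  unfolding rot_def by (metis append_take_drop_id set_append sup_commute)

lemma distinct_rot[simp]: "distinct (rot n xs) = distinct xs"
  unfolding rot_def by (metis append_take_drop_id distinct_append inf_commute)

lemma length_rot[simp]: "length (rot n xs) = length xs"
  unfolding rot_def by simp

lemma map_rot: "map f (rot n xs) = rot n (map f xs)"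
  unfolding rot_def by (simp add: drop_map take_map)

lemma prod_list_rot: "prod_list (rot n (xs :: nat list)) = prod_list xs"
  unfolding rot_def by (metis append_take_drop_id prod_list.append mult.commute)

definition rp :: "nat list \<Rightarrow> nat list \<Rightarrow> nat \<Rightarrow> nat list \<Rightarrow> nat" where
  "rp D R n i = enc (map (\<lambda>r. D ! (r - 1)) (rot n R)) (map (\<lambda>r. i ! (r - 1) - 1) (rot n R))"

lemma iota_rp: "n \<le> length R \<Longrightarrow>
   iota n (map (\<lambda>r. D ! (r - 1)) R) (map (\<lambda>r. i ! (r - 1)) R) = rp D R n i + 1"
  unfolding rp_def by (subst iota_enc) (auto simp: map_rot rot_def drop_map take_map comp_def)

lemma okidx_rp:
  assumes "valid_index D i" "set R \<subseteq> {1..length D}"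
  shows "okidx (map (\<lambda>r. D ! (r - 1)) (rot n R)) (map (\<lambda>r. i ! (r - 1) - 1) (rot n R))"
proof -
  have "i ! (r - 1) - 1 < D ! (r - 1)" if "r \<in> set R" for r
  proof -
    have "r \<in> {1..length D}" using that assms(2) by blast
    then have "r - 1 < length D" by auto
    then have "1 \<le> i ! (r - 1)" "i ! (r - 1) \<le> D ! (r - 1)" using assms(1) by (auto simp: valid_index_def)
    then show ?thesis by linarith
  qed
  moreover have "rot n R ! s \<in> set R" if "s < length R" for s
    using that by (metis nth_mem length_rot set_rot)
  ultimately show ?thesis unfolding okidx_def by auto
qed

lemma rp_less:
  assumes "valid_index D i" "set R \<subseteq> {1..length D}"
  shows "rp D R n i < prod_list (map (\<lambda>r. D ! (r - 1)) R)"
  using enc_less[OF okidx_rp[OF assms, of n]] unfolding rp_def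
  by (simp add: map_rot prod_list_rot)

lemma rp_agree:
  assumes "valid_index D i" "valid_index D i'" "set R \<subseteq> {1..length D}" "rp D R n i = rp D R n i'" "r \<in> set R"
  shows "i ! (r - 1) = i' ! (r - 1)"
proof -
  have "map (\<lambda>r. i ! (r - 1) - 1) (rot n R) = map (\<lambda>r. i' ! (r - 1) - 1) (rot n R)"
    using enc_inj[OF okidx_rp[OF assms(1,3)] okidx_rp[OF assms(2,3)]] assms(4) unfolding rp_def by blast
  then have "i ! (r - 1) - 1 = i' ! (r - 1) - 1" using assms(5) by (auto simp: map_eq_conv)
  moreover have "r \<in> {1..length D}" using assms(3,5) by blast
  then have "r - 1 < length D" by auto
  then have "1 \<le> i ! (r - 1)" "1 \<le> i' ! (r - 1)" using assms(1,2) unfolding valid_index_def by auto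
  ultimately show ?thesis by linarith
qed

lemma unfold_entry:
  assumes "valid_index D i" "set R \<union> set C = {1..length D}" "n \<le> length R" "m \<le> length C"
  shows "mixed_unfolding X D R n C m $$ (rp D R n i, rp D C m i) = X i"
proof -
  have sR: "set R \<subseteq> {1..length D}" and sC: "set C \<subseteq> {1..length D}" using assms(2) by auto
  have "(THE i'. valid_index D i'
            \<and> iota n (map (\<lambda>r. D ! (r - 1)) R) (map (\<lambda>r. i' ! (r - 1)) R) = Suc (rp D R n i)
            \<and> iota m (map (\<lambda>c. D ! (c - 1)) C) (map (\<lambda>c. i' ! (c - 1)) C) = Suc (rp D C m i)) = i"
  proof (rule the_equality)
    show "valid_index D i
            \<and> iota n (map (\<lambda>r. D ! (r - 1)) R) (map (\<lambda>r. i ! (r - 1)) R) = Suc (rp D R n i)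
            \<and> iota m (map (\<lambda>c. D ! (c - 1)) C) (map (\<lambda>c. i ! (c - 1)) C) = Suc (rp D C m i)"
      using assms iota_rp[of n R D i] iota_rp[of m C D i] by simp
  next
    fix i' assume h: "valid_index D i'
            \<and> iota n (map (\<lambda>r. D ! (r - 1)) R) (map (\<lambda>r. i' ! (r - 1)) R) = Suc (rp D R n i)
            \<and> iota m (map (\<lambda>c. D ! (c - 1)) C) (map (\<lambda>c. i' ! (c - 1)) C) = Suc (rp D C m i)"
    then have v: "valid_index D i'" and e1: "rp D R n i' = rp D R n i" and e2: "rp D C m i' = rp D C m i"
      using assms iota_rp[of n R D i'] iota_rp[of m C D i'] by auto
    show "i' = i"
    proof (rule nth_equalityI)
      show "length i' = length i" using v assms(1) by (simp add: valid_index_def)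
      fix l assume l: "l < length i'"
      then have "Suc l \<in> set R \<union> set C" using v assms(2) by (auto simp: valid_index_def)
      then show "i' ! l = i ! l"
        using rp_agree[OF v assms(1) sR e1, of "Suc l"] rp_agree[OF v assms(1) sC e2, of "Suc l"] by auto
    qed
  qed
  then show ?thesis unfolding mixed_unfolding_def
    using rp_less[OF assms(1) sR, of n] rp_less[OF assms(1) sC, of m] by simp
qed

definition posn :: "'a list \<Rightarrow> 'a \<Rightarrow> nat" where
  "posn xs x = (THE t. t < length xs \<and> xs ! t = x)"

lemma posn: assumes "distinct xs" "x \<in> set xs" shows "posn xs x < length xs" "xs ! posn xs x = x"
proof -
  have "\<exists>!t. t < length xs \<and> xs ! t = x" by (rule distinct_Ex1[OF assms])
  then have "posn xs x < length xs \<and> xs ! posn xs x = x" unfolding posn_def by (rule theI')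
  then show "posn xs x < length xs" "xs ! posn xs x = x" by auto
qed

lemma posn_nth: assumes "distinct xs" "t < length xs" shows "posn xs (xs ! t) = t"
  unfolding posn_def using assms by (auto simp: nth_eq_iff_index_eq)

lemma pick_map:
  assumes "distinct R" "set R \<subseteq> {1..length D}" "okidx (map (\<lambda>r. D ! (r - 1)) (rot n R)) jr"
    "\<And>l. l < length D \<Longrightarrow> Suc l \<in> set R \<Longrightarrow> i ! l = jr ! posn (rot n R) (Suc l) + 1"
  shows "map (\<lambda>r. i ! (r - 1) - 1) (rot n R) = jr"
proof (rule nth_equalityI)
  show "length (map (\<lambda>r. i ! (r - 1) - 1) (rot n R)) = length jr" using assms(3) by (simp add: okidx_def)
  fix t assume t: "t < length (map (\<lambda>r. i ! (r - 1) - 1) (rot n R))"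
  let ?r = "rot n R ! t"
  have r: "?r \<in> set R" using t by (metis nth_mem length_rot set_rot length_map)
  then have "?r \<in> {1..length D}" using assms(2) by blast
  then have r1: "?r - 1 < length D" "Suc (?r - 1) = ?r" by auto
  have idx: "posn (rot n R) ?r = t" using t assms(1) by (simp add: posn_nth)
  show "map (\<lambda>r. i ! (r - 1) - 1) (rot n R) ! t = jr ! t"
    using t assms(4)[OF r1(1)] r1(2) r idx by simp
qed

lemma pick_bound:
  assumes "distinct R" "set R \<subseteq> {1..length D}" "okidx (map (\<lambda>r. D ! (r - 1)) (rot n R)) jr"
    "l < length D" "Suc l \<in> set R"
  shows "jr ! posn (rot n R) (Suc l) + 1 \<le> D ! l"
proof -
  let ?t = "posn (rot n R) (Suc l)"
  have t: "?t < length (rot n R)" using assms(5) posn[of "rot n R" "Suc l"] assms(1) by simp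
  have "rot n R ! ?t = Suc l" using assms(5) posn[of "rot n R" "Suc l"] assms(1) by simp
  then show ?thesis using assms(3) t unfolding okidx_def
    by (metis Suc_eq_plus1 Suc_leI diff_Suc_1 length_map nth_map)
qed

lemma unfold_surj:
  assumes U: "set R \<union> set C = {1..length D}" and I: "set R \<inter> set C = {}" and dR: "distinct R" and dC: "distinct C"
    and p: "p < prod_list (map (\<lambda>r. D ! (r - 1)) R)" and q: "q < prod_list (map (\<lambda>c. D ! (c - 1)) C)"
  shows "\<exists>i. valid_index D i \<and> rp D R n i = p \<and> rp D C m i = q"
proof -
  have sR: "set R \<subseteq> {1..length D}" and sC: "set C \<subseteq> {1..length D}" using U by auto
  obtain jr where jr: "okidx (map (\<lambda>r. D ! (r - 1)) (rot n R)) jr" "enc (map (\<lambda>r. D ! (r - 1)) (rot n R)) jr = p"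
    using enc_surj[of p "map (\<lambda>r. D ! (r - 1)) (rot n R)"] p by (auto simp: map_rot prod_list_rot)
  obtain jc where jc: "okidx (map (\<lambda>r. D ! (r - 1)) (rot m C)) jc" "enc (map (\<lambda>r. D ! (r - 1)) (rot m C)) jc = q"
    using enc_surj[of q "map (\<lambda>r. D ! (r - 1)) (rot m C)"] q by (auto simp: map_rot prod_list_rot)
  define i where "i = map (\<lambda>l. if Suc l \<in> set R then jr ! posn (rot n R) (Suc l) + 1
                               else jc ! posn (rot m C) (Suc l) + 1) [0..<length D]"
  have iR: "i ! l = jr ! posn (rot n R) (Suc l) + 1" if "l < length D" "Suc l \<in> set R" for l
    using that by (simp add: i_def)
  have iC: "i ! l = jc ! posn (rot m C) (Suc l) + 1" if "l < length D" "Suc l \<in> set C" for l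
    using that I by (auto simp: i_def)
  have v: "valid_index D i"
    unfolding valid_index_def
  proof (intro conjI allI impI)
    show "length i = length D" by (simp add: i_def)
    fix l assume l: "l < length D"
    then have "Suc l \<in> set R \<union> set C" using U by auto
    then show "1 \<le> i ! l" "i ! l \<le> D ! l"
      using iR[OF l] iC[OF l] pick_bound[OF dR sR jr(1) l] pick_bound[OF dC sC jc(1) l] by auto
  qed
  have "rp D R n i = p" unfolding rp_def using pick_map[OF dR sR jr(1) iR] jr(2) by simp
  moreover have "rp D C m i = q" unfolding rp_def using pick_map[OF dC sC jc(1) iC] jc(2) by simp
  ultimately show ?thesis using v by blast
qed

lemma rp_inj:
  assumes "valid_index D i" "valid_index D i'" "set R \<union> set C = {1..length D}"
    "rp D R n i = rp D R n i'" "rp D C m i = rp D C m i'"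
  shows "i = i'"
proof (rule nth_equalityI)
  have sR: "set R \<subseteq> {1..length D}" and sC: "set C \<subseteq> {1..length D}" using assms(3) by auto
  show "length i = length i'" using assms(1,2) by (simp add: valid_index_def)
  fix l assume l: "l < length i"
  then have "Suc l \<in> set R \<union> set C" using assms(1,3) by (auto simp: valid_index_def)
  then show "i ! l = i' ! l"
    using rp_agree[OF assms(1,2) sR assms(4), of "Suc l"] rp_agree[OF assms(1,2) sC assms(5), of "Suc l"] by auto
qed

lemma triple:
  assumes "p < dim_row K1" "q < dim_row K2" "dim_col K1 = dim_row M" "dim_col M = dim_col K2"
  shows "(K1 * M * transpose_mat K2) $$ (p, q) =
     (\<Sum>a<dim_row M. \<Sum>b<dim_col M. K1 $$ (p, a) * M $$ (a, b) * K2 $$ (q, b))"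
proof -
  have e1: "(K1 * M) $$ (p, b) = (\<Sum>a<dim_row M. K1 $$ (p, a) * M $$ (a, b))" if "b < dim_col M" for b
    using assms that by (simp add: scalar_prod_def atLeast0LessThan)
  have "(K1 * M * transpose_mat K2) $$ (p, q) = (\<Sum>b<dim_col M. (K1 * M) $$ (p, b) * K2 $$ (q, b))"
    using assms by (simp add: scalar_prod_def atLeast0LessThan)
  also have "\<dots> = (\<Sum>b<dim_col M. \<Sum>a<dim_row M. K1 $$ (p, a) * M $$ (a, b) * K2 $$ (q, b))"
    by (rule sum.cong[OF refl]) (simp add: e1 sum_distrib_right)
  also have "\<dots> = (\<Sum>a<dim_row M. \<Sum>b<dim_col M. K1 $$ (p, a) * M $$ (a, b) * K2 $$ (q, b))"
    by (rule sum.swap)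
  finally show ?thesis .
qed

lemma kron_rp:
  assumes vi: "valid_index Dr i" and vj: "valid_index d j" and len: "length Dr = length d"
    and sR: "set R \<subseteq> {1..length d}" and dR: "distinct R"
    and dims: "\<forall>l<length d. dim_row (Us ! l) = Dr ! l \<and> dim_col (Us ! l) = d ! l"
  shows "kron_list (map (\<lambda>r. Us ! (r - 1)) (rot n R)) $$ (rp Dr R n i, rp d R n j)
     = (\<Prod>r\<in>set R. Us ! (r - 1) $$ (i ! (r - 1) - 1, j ! (r - 1) - 1))"
proof -
  let ?Ms = "map (\<lambda>r. Us ! (r - 1)) (rot n R)"
  have r1: "r - 1 < length d" if "r \<in> set R" for r
  proof -
    have "r \<in> {1..length d}" using that sR by blast
    then show ?thesis by auto
  qed
  have m1: "map dim_row ?Ms = map (\<lambda>r. Dr ! (r - 1)) (rot n R)" using dims r1 by auto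
  have m2: "map dim_col ?Ms = map (\<lambda>r. d ! (r - 1)) (rot n R)" using dims r1 by auto
  have sR': "set R \<subseteq> {1..length Dr}" using sR len by simp
  have "kron_list ?Ms $$ (rp Dr R n i, rp d R n j) =
     (\<Prod>l<length ?Ms. ?Ms ! l $$ (map (\<lambda>r. i ! (r - 1) - 1) (rot n R) ! l, map (\<lambda>r. j ! (r - 1) - 1) (rot n R) ! l))"
    unfolding rp_def using kron_list_entry[of ?Ms "map (\<lambda>r. i ! (r - 1) - 1) (rot n R)" "map (\<lambda>r. j ! (r - 1) - 1) (rot n R)", unfolded m1 m2]
      okidx_rp[OF vi sR', of n] okidx_rp[OF vj sR, of n] by simp
  also have "\<dots> = prod_list (map (\<lambda>r. Us ! (r - 1) $$ (i ! (r - 1) - 1, j ! (r - 1) - 1)) (rot n R))"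
    by (simp add: prod.list_conv_set_nth atLeast0LessThan)
  also have "\<dots> = (\<Prod>r\<in>set R. Us ! (r - 1) $$ (i ! (r - 1) - 1, j ! (r - 1) - 1))"
    using dR by (simp add: prod.distinct_set_conv_list[symmetric])
  finally show ?thesis .
qed

theorem theorem3:
  fixes A :: "nat list \<Rightarrow> complex" and d :: "nat list" and Us :: "complex mat list"
    and N k n m :: nat and R C :: "nat list"
  assumes "N \<ge> 2" and "length d = N" and "length Us = N"
    and "\<forall>l<N. 0 < d ! l \<and> 0 < dim_row (Us ! l) \<and> dim_col (Us ! l) = d ! l"
    and "1 \<le> k" and "k \<le> N - 1" and "1 \<le> n" and "n \<le> k" and "1 \<le> m" and "m \<le> N - k"
    and "length R = k" and "length C = N - k" and "distinct R" and "distinct C"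
    and "set R \<union> set C = {1..N}"
  shows "mixed_unfolding (multi_mode_prod A Us) (map dim_row Us) R n C m =
         kron_list (map (\<lambda>r. Us ! (r - 1)) (drop n R @ take n R))
         * mixed_unfolding A d R n C m
         * transpose_mat (kron_list (map (\<lambda>c. Us ! (c - 1)) (drop m C @ take m C)))"
proof -
  note ld = assms(2) and lU = assms(3) and dR = assms(13) and dC = assms(14)
  define Dr where "Dr = map dim_row Us"
  have lDr: "length Dr = N" using lU by (simp add: Dr_def)
  have dims: "\<forall>l<length d. dim_row (Us ! l) = Dr ! l \<and> dim_col (Us ! l) = d ! l"
    using assms(4) ld lU by (simp add: Dr_def)
  have U: "set R \<union> set C = {1..length d}" and Ur: "set R \<union> set C = {1..length Dr}"
    using assms(15) ld lDr by auto
  have sR: "set R \<subseteq> {1..length d}" and sC: "set C \<subseteq> {1..length d}" using U by auto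
  have sRr: "set R \<subseteq> {1..length Dr}" and sCr: "set C \<subseteq> {1..length Dr}" using Ur by auto
  have I: "set R \<inter> set C = {}"
  proof -
    have "card (set R) + card (set C) = card (set R \<union> set C) + card (set R \<inter> set C)"
      by (rule card_Un_Int) auto
    moreover have "card (set R) = k" "card (set C) = N - k" using assms(11-14) by (auto simp: distinct_card)
    moreover have "card (set R \<union> set C) = N" using assms(15) by simp
    ultimately have "card (set R \<inter> set C) = 0" using assms(6) by simp
    then show ?thesis by simp
  qed
  have nR: "n \<le> length R" and mC: "m \<le> length C" using assms(8,10,11,12) by auto
  have r1: "r - 1 < length d" if "r \<in> set R \<union> set C" for r
  proof -
    have "r \<in> {1..length d}" using that U by blast
    then show ?thesis by auto
  qed
  have mapsR: "map dim_row (map (\<lambda>r. Us ! (r - 1)) (rot n R)) = map (\<lambda>r. Dr ! (r - 1)) (rot n R)"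
     "map dim_col (map (\<lambda>r. Us ! (r - 1)) (rot n R)) = map (\<lambda>r. d ! (r - 1)) (rot n R)"
    using dims r1 by auto
  have mapsC: "map dim_row (map (\<lambda>r. Us ! (r - 1)) (rot m C)) = map (\<lambda>r. Dr ! (r - 1)) (rot m C)"
     "map dim_col (map (\<lambda>r. Us ! (r - 1)) (rot m C)) = map (\<lambda>r. d ! (r - 1)) (rot m C)"
    using dims r1 by auto
  define KR where "KR = kron_list (map (\<lambda>r. Us ! (r - 1)) (rot n R))"
  define KC where "KC = kron_list (map (\<lambda>r. Us ! (r - 1)) (rot m C))"
  define M where "M = mixed_unfolding A d R n C m"
  have dKR: "dim_row KR = prod_list (map (\<lambda>r. Dr ! (r - 1)) R)" "dim_col KR = prod_list (map (\<lambda>r. d ! (r - 1)) R)"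
    unfolding KR_def kron_list_dims mapsR by (simp_all add: map_rot prod_list_rot)
  have dKC: "dim_row KC = prod_list (map (\<lambda>r. Dr ! (r - 1)) C)" "dim_col KC = prod_list (map (\<lambda>r. d ! (r - 1)) C)"
    unfolding KC_def kron_list_dims mapsC by (simp_all add: map_rot prod_list_rot)
  have dM: "dim_row M = prod_list (map (\<lambda>r. d ! (r - 1)) R)" "dim_col M = prod_list (map (\<lambda>r. d ! (r - 1)) C)"
    unfolding M_def mixed_unfolding_def by simp_all
  define V where "V = {j. valid_index d j}"
  define g where "g = (\<lambda>i j r. Us ! (r - 1) $$ (i ! (r - 1) - 1, j ! (r - 1) - 1))"
  have bij: "bij_betw (\<lambda>j. (rp d R n j, rp d C m j)) V ({..<dim_row M} \<times> {..<dim_col M})"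
    unfolding bij_betw_def
  proof
    show "inj_on (\<lambda>j. (rp d R n j, rp d C m j)) V"
      unfolding inj_on_def V_def using rp_inj[OF _ _ U] by blast
    show "(\<lambda>j. (rp d R n j, rp d C m j)) ` V = {..<dim_row M} \<times> {..<dim_col M}"
    proof
      show "(\<lambda>j. (rp d R n j, rp d C m j)) ` V \<subseteq> {..<dim_row M} \<times> {..<dim_col M}"
        unfolding V_def dM using rp_less[OF _ sR] rp_less[OF _ sC] by auto
      show "{..<dim_row M} \<times> {..<dim_col M} \<subseteq> (\<lambda>j. (rp d R n j, rp d C m j)) ` V"
      proof safe
        fix a b assume "a < dim_row M" "b < dim_col M"
        then obtain j where "valid_index d j" "rp d R n j = a" "rp d C m j = b"
          using unfold_surj[OF U I dR dC, of a b n m] dM by auto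
        then show "(a, b) \<in> (\<lambda>j. (rp d R n j, rp d C m j)) ` V" unfolding V_def by force
      qed
    qed
  qed
  have main: "mixed_unfolding (multi_mode_prod A Us) Dr R n C m = KR * M * transpose_mat KC"
  proof (rule eq_matI)
    show "dim_row (mixed_unfolding (multi_mode_prod A Us) Dr R n C m) = dim_row (KR * M * transpose_mat KC)"
      using dKR by (simp add: mixed_unfolding_def)
    show "dim_col (mixed_unfolding (multi_mode_prod A Us) Dr R n C m) = dim_col (KR * M * transpose_mat KC)"
      using dKC by (simp add: mixed_unfolding_def)
    fix p q assume p: "p < dim_row (KR * M * transpose_mat KC)" and q: "q < dim_col (KR * M * transpose_mat KC)"
    then have p': "p < prod_list (map (\<lambda>r. Dr ! (r - 1)) R)" and q': "q < prod_list (map (\<lambda>r. Dr ! (r - 1)) C)"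
      using dKR dKC by auto
    obtain i where vi: "valid_index Dr i" and ip: "rp Dr R n i = p" and iq: "rp Dr C m i = q"
      using unfold_surj[OF Ur I dR dC p' q'] by blast
    have li: "length i = length d" using vi lDr ld by (simp add: valid_index_def)
    have "mixed_unfolding (multi_mode_prod A Us) Dr R n C m $$ (p, q) = multi_mode_prod A Us i"
      using unfold_entry[OF vi Ur nR mC] ip iq by simp
    also have "\<dots> = (\<Sum>j\<in>Sset d N i. A j * (\<Prod>l<N. Us ! l $$ (i ! l - 1, j ! l - 1)))"
      unfolding multi_mode_prod_def lU using mmp[of d Us N i A] dims ld li by simp
    also have "Sset d N i = V" unfolding Sset_def V_def valid_index_def using li ld by auto
    also have "(\<Sum>j\<in>V. A j * (\<Prod>l<N. Us ! l $$ (i ! l - 1, j ! l - 1)))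
        = (\<Sum>j\<in>V. KR $$ (p, rp d R n j) * M $$ (rp d R n j, rp d C m j) * KC $$ (q, rp d C m j))"
    proof (rule sum.cong[OF refl])
      fix j assume "j \<in> V"
      then have vj: "valid_index d j" by (simp add: V_def)
      have "KR $$ (p, rp d R n j) = prod (g i j) (set R)"
        unfolding KR_def g_def ip[symmetric] by (rule kron_rp[OF vi vj _ sR dR dims]) (simp add: lDr ld)
      moreover have "KC $$ (q, rp d C m j) = prod (g i j) (set C)"
        unfolding KC_def g_def iq[symmetric] by (rule kron_rp[OF vi vj _ sC dC dims]) (simp add: lDr ld)
      moreover have "M $$ (rp d R n j, rp d C m j) = A j"
        unfolding M_def by (rule unfold_entry[OF vj U nR mC])
      moreover have "prod (g i j) (set R) * prod (g i j) (set C) = (\<Prod>l<N. Us ! l $$ (i ! l - 1, j ! l - 1))"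
      proof -
        have "prod (g i j) (set R) * prod (g i j) (set C) = prod (g i j) {1..N}"
          using I assms(15) by (metis List.finite_set prod.union_disjoint)
        also have "\<dots> = (\<Prod>l<N. g i j (Suc l))" by (simp add: prod.atLeast1_atMost_eq)
        finally show ?thesis by (simp add: g_def)
      qed
      ultimately show "A j * (\<Prod>l<N. Us ! l $$ (i ! l - 1, j ! l - 1))
          = KR $$ (p, rp d R n j) * M $$ (rp d R n j, rp d C m j) * KC $$ (q, rp d C m j)"
        by (simp add: mult_ac)
    qed
    also have "\<dots> = (\<Sum>(a, b)\<in>{..<dim_row M} \<times> {..<dim_col M}. KR $$ (p, a) * M $$ (a, b) * KC $$ (q, b))"
      using sum.reindex_bij_betw[OF bij, of "\<lambda>(a, b). KR $$ (p, a) * M $$ (a, b) * KC $$ (q, b)"] by simp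
    also have "\<dots> = (\<Sum>a<dim_row M. \<Sum>b<dim_col M. KR $$ (p, a) * M $$ (a, b) * KC $$ (q, b))"
      by (rule sum.cartesian_product[symmetric])
    also have "\<dots> = (KR * M * transpose_mat KC) $$ (p, q)"
      using p q dKR dKC dM by (subst triple) auto
    finally show "mixed_unfolding (multi_mode_prod A Us) Dr R n C m $$ (p, q) = (KR * M * transpose_mat KC) $$ (p, q)" .
  qed
  then show ?thesis unfolding KR_def KC_def M_def Dr_def rot_def .
qed

end
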